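(* Let $1<\beta<2$, $m_{-1}=0$ and $m_p=T_\beta^p(\beta/2)$ for $p\ge0$, and assume the points $m_{-1},m_0,m_1,\dots$ are pairwise distinct. Define $\psi_0=(\beta/2)^{-1/2}\mathbf 1_{[0,\beta/2]}$, and for $p\ge1$ let $m_l=\max\{m_j:-1\le j<p,\ m_j<m_p\}$, $m_u=\min\{m_j:-1\le j<p,\ m_j>m_p\}$, $C_p=\sqrt{\frac{(m_p-m_l)(m_u-m_p)}{m_u-m_l}}$, and $$\psi_p(x)=\begin{cases}C_p/(m_p-m_l)&m_l\le x\le m_p\\ -C_p/(m_u-m_p)& m_p<x\le m_u\\ 0&\text{otherwise on }[0,1].\end{cases}$$ Then $\{\psi_p\}_{p\ge0}$ is an orthonormal family in $L^2[0,1]$, and the matrix elements $\langle n|\mathcal L_\beta|m\rangle=\int_0^1\psi_n(x)[\mathcal L_\beta\psi_m](x)\,dx$ satisfy $\langle n|\mathcal L_\beta|m\rangle=0$ whenever $n>m+1$ (upper Hessenberg form).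
   Context: $T_\beta(x)=\beta x$ for $0\le x<\tfrac12$, $T_\beta(x)=\beta(x-\tfrac12)$ for $\tfrac12\le x\le1$. The transfer operator is $[\mathcal L_\beta f](y)=\frac1\beta\left[f\!\left(\frac y\beta\right)+f\!\left(\frac y\beta+\frac12\right)\right]$ for $0\le y\le\beta/2$ and $[\mathcal L_\beta f](y)=0$ for $\beta/2<y\le1$. (Note $m_p\in(0,\beta/2)$ for $p\ge1$ under the distinctness assumption, so $m_l,m_u$ exist.) *)

theory Defs
  imports "HOL-Analysis.Analysis"
begin

definition Tb :: "real \<Rightarrow> real \<Rightarrow> real" where
  "Tb \<beta> x = (if x < 1/2 then \<beta> * x else \<beta> * (x - 1/2))"

definition Lb :: "real \<Rightarrow> (real \<Rightarrow> real) \<Rightarrow> real \<Rightarrow> real" where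
  "Lb \<beta> f y = (if 0 \<le> y \<and> y \<le> \<beta>/2
                 then (1/\<beta>) * (f (y/\<beta>) + f (y/\<beta> + 1/2)) else 0)"

definition mpt :: "real \<Rightarrow> int \<Rightarrow> real" where
  "mpt \<beta> j = (if j = -1 then 0 else (Tb \<beta> ^^ nat j) (\<beta>/2))"

definition mlow :: "real \<Rightarrow> nat \<Rightarrow> real" where
  "mlow \<beta> p = Max {mpt \<beta> j | j. -1 \<le> j \<and> j < int p \<and> mpt \<beta> j < mpt \<beta> (int p)}"

definition mup :: "real \<Rightarrow> nat \<Rightarrow> real" where
  "mup \<beta> p = Min {mpt \<beta> j | j. -1 \<le> j \<and> j < int p \<and> mpt \<beta> j > mpt \<beta> (int p)}"

definition Cp :: "real \<Rightarrow> nat \<Rightarrow> real" where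
  "Cp \<beta> p = sqrt ((mpt \<beta> (int p) - mlow \<beta> p) * (mup \<beta> p - mpt \<beta> (int p))
                     / (mup \<beta> p - mlow \<beta> p))"

definition psi :: "real \<Rightarrow> nat \<Rightarrow> real \<Rightarrow> real" where
  "psi \<beta> p x =
     (if p = 0 then (if 0 \<le> x \<and> x \<le> \<beta>/2 then (\<beta>/2) powr (-1/2) else 0)
      else if mlow \<beta> p \<le> x \<and> x \<le> mpt \<beta> (int p)
        then Cp \<beta> p / (mpt \<beta> (int p) - mlow \<beta> p)
      else if mpt \<beta> (int p) < x \<and> x \<le> mup \<beta> p
        then - Cp \<beta> p / (mup \<beta> p - mpt \<beta> (int p))
      else 0)"

end

theory Submission
  imports Defs "HOL-Analysis.Analysis"
begin


lemma mpt_m1[simp]: "mpt \<beta> (-1) = 0" by (simp add: mpt_def)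
lemma mpt_0[simp]: "mpt \<beta> 0 = \<beta>/2" by (simp add: mpt_def)
lemma Tb_0: "Tb \<beta> 0 = 0" by (simp add: Tb_def)

lemma mpt_Suc: "0 \<le> j \<Longrightarrow> mpt \<beta> (j+1) = Tb \<beta> (mpt \<beta> j)"
  by (simp add: mpt_def nat_add_distrib)

lemma Tb_mpt: "-1 \<le> j \<Longrightarrow> \<exists>j'. -1 \<le> j' \<and> j' \<le> j+1 \<and> Tb \<beta> (mpt \<beta> j) = mpt \<beta> j'"
proof (cases "j = -1")
  case True then show ?thesis by (intro exI[of _ "-1"]) (simp add: Tb_0)
next
  case False
  assume "-1 \<le> j"
  with False have "0 \<le> j" by simp
  then show ?thesis by (intro exI[of _ "j+1"]) (simp add: mpt_Suc)
qed

lemma funpow_range: "1 < \<beta> \<Longrightarrow> \<beta> < 2 \<Longrightarrow> 0 \<le> (Tb \<beta> ^^ k) (\<beta>/2) \<and> (Tb \<beta> ^^ k) (\<beta>/2) \<le> \<beta>/2"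
proof (induction k)
  case 0 then show ?case by simp
next
  case (Suc k)
  define x where "x = (Tb \<beta> ^^ k) (\<beta>/2)"
  have x: "0 \<le> x" "x \<le> \<beta>/2" using Suc by (auto simp: x_def)
  have "0 \<le> Tb \<beta> x \<and> Tb \<beta> x \<le> \<beta>/2"
  proof (cases "x < 1/2")
    case True then show ?thesis using x Suc.prems by (simp add: Tb_def)
  next
    case False
    then have "x - 1/2 \<le> 1/2" using x Suc.prems by simp
    then have "\<beta> * (x - 1/2) \<le> \<beta> * (1/2)" using Suc.prems by (intro mult_left_mono) auto
    then show ?thesis using False x Suc.prems by (simp add: Tb_def)
  qed
  then show ?case by (simp add: x_def)
qed

lemma mpt_range: "1 < \<beta> \<Longrightarrow> \<beta> < 2 \<Longrightarrow> 0 \<le> mpt \<beta> j \<and> mpt \<beta> j \<le> \<beta>/2"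
  using funpow_range[of \<beta> "nat j"] by (simp add: mpt_def)

lemma cmp:
  fixes t x y a b :: real
  assumes "t \<notin> {a<..<b}" "x \<in> {a<..<b}" "y \<in> {a<..<b}"
  shows "(t \<le> x \<longleftrightarrow> t \<le> y) \<and> (x \<le> t \<longleftrightarrow> y \<le> t) \<and> (t < x \<longleftrightarrow> t < y) \<and> (x < t \<longleftrightarrow> y < t)"
  using assms by auto

definition pcon :: "real \<Rightarrow> (real \<Rightarrow> real) \<Rightarrow> int \<Rightarrow> bool" where
  "pcon \<beta> f k \<longleftrightarrow> (\<forall>a b x y. (\<forall>j. -1 \<le> j \<and> j \<le> k \<longrightarrow> mpt \<beta> j \<notin> {a<..<b}) \<longrightarrow>
      x \<in> {a<..<b} \<longrightarrow> y \<in> {a<..<b} \<longrightarrow> f x = f y)"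

lemma pcon_mono: "pcon \<beta> f k \<Longrightarrow> k \<le> k' \<Longrightarrow> pcon \<beta> f k'"
  unfolding pcon_def by (meson order.trans)

lemma pcon_Lb:
  assumes b: "1 < \<beta>" "\<beta> < 2" and pc: "pcon \<beta> f k" and k: "0 \<le> k"
  shows "pcon \<beta> (Lb \<beta> f) (k+1)"
  unfolding pcon_def
proof (intro allI impI)
  fix a b x y :: real
  assume H: "\<forall>j. -1 \<le> j \<and> j \<le> k + 1 \<longrightarrow> mpt \<beta> j \<notin> {a<..<b}"
    and x: "x \<in> {a<..<b}" and y: "y \<in> {a<..<b}"
  have z: "0 \<notin> {a<..<b}" using H[rule_format, of "-1"] k by simp
  have h: "\<beta>/2 \<notin> {a<..<b}" using H[rule_format, of 0] k by simp
  note c1 = cmp[OF z x y] and c2 = cmp[OF h x y]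
  show "Lb \<beta> f x = Lb \<beta> f y"
  proof (cases "0 \<le> x \<and> x \<le> \<beta>/2")
    case False
    then have "\<not> (0 \<le> y \<and> y \<le> \<beta>/2)" using c1 c2 by blast
    then show ?thesis using False unfolding Lb_def by presburger
  next
    case True
    then have yy: "0 \<le> y \<and> y \<le> \<beta>/2" using c1 c2 by blast
    define a' where "a' = max a 0"
    define b' where "b' = min b (\<beta>/2)"
    have x': "x \<in> {a'<..<b'}" and y': "y \<in> {a'<..<b'}"
      using x y True yy z h by (auto simp: a'_def b'_def)
    have a'0: "0 \<le> a'" and b'h: "b' \<le> \<beta>/2" by (auto simp: a'_def b'_def)
    have sub: "{a'<..<b'} \<subseteq> {a<..<b}" by (auto simp: a'_def b'_def)
    have T: "\<And>j. -1 \<le> j \<Longrightarrow> j \<le> k \<Longrightarrow> Tb \<beta> (mpt \<beta> j) \<notin> {a'<..<b'}"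
    proof -
      fix j :: int assume j: "-1 \<le> j" "j \<le> k"
      obtain j' where "-1 \<le> j'" "j' \<le> j+1" "Tb \<beta> (mpt \<beta> j) = mpt \<beta> j'"
        using Tb_mpt[OF j(1)] by blast
      then show "Tb \<beta> (mpt \<beta> j) \<notin> {a'<..<b'}" using H j sub by force
    qed
    have e1: "f (x/\<beta>) = f (y/\<beta>)"
    proof -
      have "\<forall>j. -1 \<le> j \<and> j \<le> k \<longrightarrow> mpt \<beta> j \<notin> {a'/\<beta><..<b'/\<beta>}"
      proof (intro allI impI)
        fix j assume j: "-1 \<le> j \<and> j \<le> k"
        show "mpt \<beta> j \<notin> {a'/\<beta><..<b'/\<beta>}"
        proof
          assume s: "mpt \<beta> j \<in> {a'/\<beta><..<b'/\<beta>}"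
          have "b'/\<beta> \<le> 1/2" using b'h b by (simp add: divide_simps)
          then have "mpt \<beta> j < 1/2" using s by (simp only: greaterThanLessThan_iff) linarith
          then have "Tb \<beta> (mpt \<beta> j) = \<beta> * mpt \<beta> j" by (simp add: Tb_def)
          moreover have "\<beta> * mpt \<beta> j \<in> {a'<..<b'}" using s b by (auto simp: field_simps)
          ultimately show False using T[of j] j by simp
        qed
      qed
      moreover have "x/\<beta> \<in> {a'/\<beta><..<b'/\<beta>}" "y/\<beta> \<in> {a'/\<beta><..<b'/\<beta>}"
        using x' y' b by (auto simp: divide_strict_right_mono)
      ultimately show ?thesis using pc unfolding pcon_def by blast
    qed
    have e2: "f (x/\<beta> + 1/2) = f (y/\<beta> + 1/2)"
    proof -
      have "\<forall>j. -1 \<le> j \<and> j \<le> k \<longrightarrow> mpt \<beta> j \<notin> {a'/\<beta>+1/2<..<b'/\<beta>+1/2}"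
      proof (intro allI impI)
        fix j assume j: "-1 \<le> j \<and> j \<le> k"
        show "mpt \<beta> j \<notin> {a'/\<beta>+1/2<..<b'/\<beta>+1/2}"
        proof
          assume s: "mpt \<beta> j \<in> {a'/\<beta>+1/2<..<b'/\<beta>+1/2}"
          have "0 \<le> a'/\<beta>" using a'0 b by simp
          then have "\<not> mpt \<beta> j < 1/2" using s by (simp only: greaterThanLessThan_iff) linarith
          then have "Tb \<beta> (mpt \<beta> j) = \<beta> * (mpt \<beta> j - 1/2)" by (simp add: Tb_def)
          moreover have "\<beta> * (mpt \<beta> j - 1/2) \<in> {a'<..<b'}" using s b by (auto simp: field_simps)
          ultimately show False using T[of j] j by simp
        qed
      qed
      moreover have "x/\<beta>+1/2 \<in> {a'/\<beta>+1/2<..<b'/\<beta>+1/2}" "y/\<beta>+1/2 \<in> {a'/\<beta>+1/2<..<b'/\<beta>+1/2}"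
        using x' y' b by (auto simp: divide_strict_right_mono)
      ultimately show ?thesis using pc unfolding pcon_def by blast
    qed
    show ?thesis using True yy e1 e2 by (simp add: Lb_def)
  qed
qed



locale orb =
  fixes \<beta> :: real
  assumes b1: "1 < \<beta>" and b2: "\<beta> < 2"
    and dist: "\<And>i j. -1 \<le> i \<Longrightarrow> -1 \<le> j \<Longrightarrow> i \<noteq> j \<Longrightarrow> mpt \<beta> i \<noteq> mpt \<beta> j"
begin

lemma rng: "-1 \<le> j \<Longrightarrow> 0 \<le> mpt \<beta> j \<and> mpt \<beta> j \<le> \<beta>/2"
  using mpt_range[OF b1 b2] by blast

lemma mp_pos: "0 < p \<Longrightarrow> 0 < mpt \<beta> (int p) \<and> mpt \<beta> (int p) < \<beta>/2"
proof -
  assume p: "0 < p"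
  have "mpt \<beta> (int p) \<noteq> mpt \<beta> (-1)" "mpt \<beta> (int p) \<noteq> mpt \<beta> 0"
    using dist[of "int p" "-1"] dist[of "int p" 0] p by auto
  moreover have "0 \<le> mpt \<beta> (int p)" "mpt \<beta> (int p) \<le> \<beta>/2" using rng[of "int p"] by auto
  ultimately show ?thesis by (simp add: order.strict_iff_order)
qed

definition "LS p = {mpt \<beta> j | j. -1 \<le> j \<and> j < int p \<and> mpt \<beta> j < mpt \<beta> (int p)}"
definition "US p = {mpt \<beta> j | j. -1 \<le> j \<and> j < int p \<and> mpt \<beta> j > mpt \<beta> (int p)}"

lemma LS_fin: "finite (LS p)" and US_fin: "finite (US p)"
proof -
  have "LS p \<subseteq> mpt \<beta> ` {-1..<int p}" "US p \<subseteq> mpt \<beta> ` {-1..<int p}"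
    by (auto simp: LS_def US_def)
  then show "finite (LS p)" "finite (US p)" by (auto intro: finite_subset)
qed

lemma LS_ne: "0 < p \<Longrightarrow> 0 \<in> LS p" and US_ne: "0 < p \<Longrightarrow> \<beta>/2 \<in> US p"
proof -
  assume p: "0 < p"
  show "0 \<in> LS p" unfolding LS_def using mp_pos[OF p]
    by (intro CollectI exI[of _ "-1"]) simp
  show "\<beta>/2 \<in> US p" unfolding US_def using mp_pos[OF p] p
    by (intro CollectI exI[of _ 0]) simp
qed

lemma mlow_eq: "mlow \<beta> p = Max (LS p)" by (simp add: mlow_def LS_def)
lemma mup_eq: "mup \<beta> p = Min (US p)" by (simp add: mup_def US_def)

lemma mlow_in: "0 < p \<Longrightarrow> mlow \<beta> p \<in> LS p"
  unfolding mlow_eq using LS_fin LS_ne by (intro Max_in) auto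
lemma mup_in: "0 < p \<Longrightarrow> mup \<beta> p \<in> US p"
  unfolding mup_eq using US_fin US_ne by (intro Min_in) auto

lemma ord: "0 < p \<Longrightarrow> mlow \<beta> p < mpt \<beta> (int p) \<and> mpt \<beta> (int p) < mup \<beta> p"
proof -
  assume p: "0 < p"
  have "\<And>z. z \<in> LS p \<Longrightarrow> z < mpt \<beta> (int p)" "\<And>z. z \<in> US p \<Longrightarrow> z > mpt \<beta> (int p)"
    unfolding LS_def US_def by auto
  then show ?thesis using mlow_in[OF p] mup_in[OF p] by auto
qed

lemma ml_bnd: "0 < p \<Longrightarrow> 0 \<le> mlow \<beta> p" and mu_bnd: "0 < p \<Longrightarrow> mup \<beta> p \<le> \<beta>/2"
proof -
  assume p: "0 < p"
  show "0 \<le> mlow \<beta> p" unfolding mlow_eq using LS_fin LS_ne[OF p] by (rule Max_ge)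
  show "mup \<beta> p \<le> \<beta>/2" unfolding mup_eq using US_fin US_ne[OF p] by (rule Min_le)
qed

lemma ml_pt: "0 < p \<Longrightarrow> \<exists>j. -1 \<le> j \<and> j < int p \<and> mlow \<beta> p = mpt \<beta> j"
  using mlow_in unfolding LS_def by blast
lemma mu_pt: "0 < p \<Longrightarrow> \<exists>j. -1 \<le> j \<and> j < int p \<and> mup \<beta> p = mpt \<beta> j"
  using mup_in unfolding US_def by blast

lemma gap: "0 < p \<Longrightarrow> -1 \<le> j \<Longrightarrow> j < int p \<Longrightarrow> mpt \<beta> j \<notin> {mlow \<beta> p<..<mup \<beta> p}"
proof
  assume p: "0 < p" and j: "-1 \<le> j" "j < int p" and s: "mpt \<beta> j \<in> {mlow \<beta> p<..<mup \<beta> p}"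
  have ne: "mpt \<beta> j \<noteq> mpt \<beta> (int p)" using dist[of j "int p"] j by auto
  show False
  proof (cases "mpt \<beta> j < mpt \<beta> (int p)")
    case True
    then have "mpt \<beta> j \<in> LS p" using j unfolding LS_def by blast
    then have "mpt \<beta> j \<le> mlow \<beta> p" unfolding mlow_eq using LS_fin by simp
    then show False using s by simp
  next
    case False
    then have "mpt \<beta> (int p) < mpt \<beta> j" using ne by auto
    then have "mpt \<beta> j \<in> US p" using j unfolding US_def by blast
    then have "mup \<beta> p \<le> mpt \<beta> j" unfolding mup_eq using US_fin by simp
    then show False using s by simp
  qed
qed

lemma pcon_psi: "pcon \<beta> (psi \<beta> p) (int p)"
  unfolding pcon_def
proof (intro allI impI)
  fix a b x y :: real
  assume H: "\<forall>j. -1 \<le> j \<and> j \<le> int p \<longrightarrow> mpt \<beta> j \<notin> {a<..<b}"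
    and x: "x \<in> {a<..<b}" and y: "y \<in> {a<..<b}"
  show "psi \<beta> p x = psi \<beta> p y"
  proof (cases "p = 0")
    case True
    have "0 \<notin> {a<..<b}" "\<beta>/2 \<notin> {a<..<b}" using H[rule_format, of "-1"] H[rule_format, of 0] by auto
    note c = cmp[OF this(1) x y] cmp[OF this(2) x y]
    show ?thesis unfolding psi_def by (simp only: c True if_True simp_thms)
  next
    case False
    then have p: "0 < p" by simp
    obtain j1 where j1: "-1 \<le> j1" "j1 < int p" "mlow \<beta> p = mpt \<beta> j1" using ml_pt[OF p] by blast
    obtain j2 where j2: "-1 \<le> j2" "j2 < int p" "mup \<beta> p = mpt \<beta> j2" using mu_pt[OF p] by blast
    have "mlow \<beta> p \<notin> {a<..<b}" "mup \<beta> p \<notin> {a<..<b}" "mpt \<beta> (int p) \<notin> {a<..<b}"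
      using H j1 j2 by auto
    note c = cmp[OF this(1) x y] cmp[OF this(2) x y] cmp[OF this(3) x y]
    show ?thesis unfolding psi_def by (simp only: c False if_False)
  qed
qed

end


definition step :: "real \<Rightarrow> real \<Rightarrow> real \<Rightarrow> real \<Rightarrow> real \<Rightarrow> real \<Rightarrow> real" where
  "step A B a b c = (\<lambda>x. A * indicator {a..b} x + B * indicator {b<..c} x)"

lemma step_meas[measurable]: "step A B a b c \<in> borel_measurable lborel"
  unfolding step_def by measurable

lemma step_sq: "(step A B a b c x)\<^sup>2 = step (A\<^sup>2) (B\<^sup>2) a b c x"
  by (auto simp: step_def indicator_def power2_eq_square)

lemma step_int:
  fixes A B a b c :: real
  assumes "0 \<le> a" "a \<le> b" "b \<le> c" "c \<le> 1"
  shows "set_integrable lborel {0..1} (step A B a b c)"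
    and "(LINT x:{0..1}|lborel. step A B a b c x) = A*(b-a) + B*(c-b)"
proof -
  have eq: "(\<lambda>x. indicator {0..1} x *\<^sub>R step A B a b c x) = step A B a b c"
    using assms by (auto simp: indicator_def fun_eq_iff step_def)
  have i1: "integrable lborel (\<lambda>x. A * indicator {a..b} x :: real)"
    using assms by (intro integrable_mult_right integrable_real_indicator) auto
  have i2: "integrable lborel (\<lambda>x. B * indicator {b<..c} x :: real)"
    using assms by (intro integrable_mult_right integrable_real_indicator) auto
  have int: "integrable lborel (step A B a b c)"
    unfolding step_def by (rule Bochner_Integration.integrable_add[OF i1 i2])
  show "set_integrable lborel {0..1} (step A B a b c)"
    unfolding set_integrable_def eq by (rule int)
  show "(LINT x:{0..1}|lborel. step A B a b c x) = A*(b-a) + B*(c-b)"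
    unfolding set_lebesgue_integral_def eq unfolding step_def
    using assms by (simp add: Bochner_Integration.integral_add[OF i1 i2])
qed

lemma sqd: "(d::real) \<noteq> 0 \<Longrightarrow> (C/d)\<^sup>2*d = C\<^sup>2/d"
  by (simp add: field_simps power2_eq_square)

context orb
begin

lemma psi_zero_out: "0 < n \<Longrightarrow> x \<notin> {mlow \<beta> n..mup \<beta> n} \<Longrightarrow> psi \<beta> n x = 0"
  using ord[of n] by (auto simp: psi_def)

lemma psi_step: "\<exists>A B a b c. 0 \<le> a \<and> a \<le> b \<and> b \<le> c \<and> c \<le> 1 \<and> psi \<beta> n = step A B a b c
   \<and> A\<^sup>2*(b-a) + B\<^sup>2*(c-b) = 1 \<and> (0 < n \<longrightarrow> A*(b-a)+B*(c-b) = 0)"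
proof (cases "n = 0")
  case True
  define K where "K = (\<beta>/2) powr (-1/2)"
  have K2: "K\<^sup>2 * (\<beta>/2 - 0) = 1"
  proof -
    have "K\<^sup>2 = (\<beta>/2) powr (-1/2 + -1/2)" unfolding K_def power2_eq_square
      by (simp only: powr_add)
    also have "\<dots> = (\<beta>/2) powr -1" by simp
    also have "\<dots> = 1/(\<beta>/2)" using b1 by (intro powr_neg_one) simp
    finally show ?thesis using b1 by simp
  qed
  have "psi \<beta> n = step K 0 0 (\<beta>/2) (\<beta>/2)"
    using True by (auto simp: psi_def step_def K_def fun_eq_iff indicator_def)
  then show ?thesis using True K2 b1 b2
    by (intro exI[of _ K] exI[of _ 0] exI[of _ 0] exI[of _ "\<beta>/2"] exI[of _ "\<beta>/2"]) auto
next
  case False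
  then have n: "0 < n" by simp
  define l where "l = mlow \<beta> n"
  define u where "u = mup \<beta> n"
  define m where "m = mpt \<beta> (int n)"
  define C where "C = Cp \<beta> n"
  have o: "l < m" "m < u" using ord[OF n] by (auto simp: l_def u_def m_def)
  have lb: "0 \<le> l" "u \<le> \<beta>/2" using ml_bnd[OF n] mu_bnd[OF n] by (auto simp: l_def u_def)
  have C2: "C\<^sup>2 = (m - l) * (u - m) / (u - l)"
    unfolding C_def Cp_def l_def[symmetric] u_def[symmetric] m_def[symmetric]
    using o by simp
  have eq: "psi \<beta> n = step (C/(m-l)) (-C/(u-m)) l m u"
    using False o by (auto simp: psi_def step_def fun_eq_iff indicator_def
      l_def[symmetric] u_def[symmetric] m_def[symmetric] C_def[symmetric])
  have q1: "(C/(m-l))\<^sup>2*(m-l) = C\<^sup>2/(m-l)" using o by (intro sqd) simp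
  have q2: "(-C/(u-m))\<^sup>2*(u-m) = C\<^sup>2/(u-m)" using o sqd[of "u-m" "-C"] by simp
  have q3: "C\<^sup>2/(m-l) + C\<^sup>2/(u-m) = C\<^sup>2*(u-l)/((m-l)*(u-m))" using o by (simp add: field_simps)
  have q4: "C\<^sup>2*(u-l)/((m-l)*(u-m)) = 1" unfolding C2 using o by simp
  have n1: "(C/(m-l))\<^sup>2*(m-l) + (-C/(u-m))\<^sup>2*(u-m) = 1"
    using q1 q2 q3 q4 by simp
  have n0: "(C/(m-l))*(m-l) + (-C/(u-m))*(u-m) = 0"
    using o by simp
  show ?thesis using eq n1 n0 o lb b2
    by (intro exI[of _ "C/(m-l)"] exI[of _ "-C/(u-m)"] exI[of _ l] exI[of _ m] exI[of _ u]) auto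
qed

lemma psi_meas[measurable]: "psi \<beta> n \<in> borel_measurable lborel"
  using psi_step[of n] by auto

lemma psi_sq: "set_integrable lborel {0..1} (\<lambda>x. (psi \<beta> n x)\<^sup>2) \<and>
     (LINT x:{0..1}|lborel. psi \<beta> n x * psi \<beta> n x) = 1"
proof -
  obtain A B a b c where H: "0 \<le> a" "a \<le> b" "b \<le> c" "c \<le> 1" "psi \<beta> n = step A B a b c"
     "A\<^sup>2*(b-a) + B\<^sup>2*(c-b) = 1"
    using psi_step[of n] by blast
  have e: "(\<lambda>x. (psi \<beta> n x)\<^sup>2) = step (A\<^sup>2) (B\<^sup>2) a b c" using H(5) by (simp add: step_sq)
  have e2: "(\<lambda>x. psi \<beta> n x * psi \<beta> n x) = step (A\<^sup>2) (B\<^sup>2) a b c"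
    using e by (simp add: power2_eq_square)
  show ?thesis unfolding e using step_int[OF H(1-4), of "A\<^sup>2" "B\<^sup>2"] H(6)
    by (simp add: e2[unfolded fun_eq_iff, rule_format])
qed

lemma psi_int0: "0 < n \<Longrightarrow> (LINT x:{0..1}|lborel. psi \<beta> n x) = 0"
proof -
  assume n: "0 < n"
  obtain A B a b c where H: "0 \<le> a" "a \<le> b" "b \<le> c" "c \<le> 1" "psi \<beta> n = step A B a b c"
     "A*(b-a) + B*(c-b) = 0"
    using psi_step[of n] n by blast
  show ?thesis unfolding H(5) using step_int[OF H(1-4), of A B] H(6) by simp
qed

lemma lemA:
  assumes n: "0 < n" and g[measurable]: "g \<in> borel_measurable lborel"
    and gc: "\<And>x y. x \<in> {mlow \<beta> n<..<mup \<beta> n} \<Longrightarrow> y \<in> {mlow \<beta> n<..<mup \<beta> n} \<Longrightarrow> g x = g y"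
  shows "(LINT x:{0..1}|lborel. psi \<beta> n x * g x) = 0"
proof -
  define c where "c = g ((mlow \<beta> n + mup \<beta> n)/2)"
  have mid: "(mlow \<beta> n + mup \<beta> n)/2 \<in> {mlow \<beta> n<..<mup \<beta> n}" using ord[OF n] by auto
  have pt: "\<And>x. x \<noteq> mlow \<beta> n \<Longrightarrow> x \<noteq> mup \<beta> n \<Longrightarrow> psi \<beta> n x * g x = psi \<beta> n x * c"
  proof -
    fix x assume x1: "x \<noteq> mlow \<beta> n" and x2: "x \<noteq> mup \<beta> n"
    from x1 x2 have x: "x \<notin> {mlow \<beta> n, mup \<beta> n}" by simp
    show "psi \<beta> n x * g x = psi \<beta> n x * c"
    proof (cases "x \<in> {mlow \<beta> n<..<mup \<beta> n}")
      case True then show ?thesis using gc[OF True mid] by (simp add: c_def)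
    next
      case False
      then have "x \<notin> {mlow \<beta> n..mup \<beta> n}" using x by auto
      then show ?thesis using psi_zero_out[OF n] by simp
    qed
  qed
  have "(LINT x:{0..1}|lborel. psi \<beta> n x * g x) = (LINT x:{0..1}|lborel. psi \<beta> n x * c)"
    unfolding set_lebesgue_integral_def
  proof (rule integral_cong_AE)
    show "AE x in lborel. indicator {0..1} x *\<^sub>R (psi \<beta> n x * g x) = indicator {0..1} x *\<^sub>R (psi \<beta> n x * c)"
    proof (rule AE_I'[OF finite_imp_null_set_lborel[of "{mlow \<beta> n, mup \<beta> n}"]])
      show "finite {mlow \<beta> n, mup \<beta> n}" by simp
      show "{x \<in> space lborel. \<not> indicator {0..1} x *\<^sub>R (psi \<beta> n x * g x) = indicator {0..1} x *\<^sub>R (psi \<beta> n x * c)} \<subseteq> {mlow \<beta> n, mup \<beta> n}"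
      proof
        fix x assume "x \<in> {x \<in> space lborel. \<not> indicator {0..1} x *\<^sub>R (psi \<beta> n x * g x) = indicator {0..1} x *\<^sub>R (psi \<beta> n x * c)}"
        then have "psi \<beta> n x * g x \<noteq> psi \<beta> n x * c" by auto
        then show "x \<in> {mlow \<beta> n, mup \<beta> n}" using pt[of x] by auto
      qed
    qed
  qed measurable
  also have "\<dots> = 0" using psi_int0[OF n] by simp
  finally show ?thesis .
qed

lemma pcon_const: "0 < n \<Longrightarrow> pcon \<beta> f (int n - 1) \<Longrightarrow>
   x \<in> {mlow \<beta> n<..<mup \<beta> n} \<Longrightarrow> y \<in> {mlow \<beta> n<..<mup \<beta> n} \<Longrightarrow> f x = f y"
proof -
  assume n: "0 < n" and pc: "pcon \<beta> f (int n - 1)" and x: "x \<in> {mlow \<beta> n<..<mup \<beta> n}"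
    and y: "y \<in> {mlow \<beta> n<..<mup \<beta> n}"
  have H: "\<forall>j. -1 \<le> j \<and> j \<le> int n - 1 \<longrightarrow> mpt \<beta> j \<notin> {mlow \<beta> n<..<mup \<beta> n}"
    using gap[OF n] by auto
  show "f x = f y" using pc unfolding pcon_def using H x y by blast
qed

lemma Lb_meas: "Lb \<beta> (psi \<beta> m) \<in> borel_measurable lborel"
  unfolding Lb_def by measurable

end


theorem mainTheorem8:
  fixes \<beta> :: real
  assumes "1 < \<beta>" and "\<beta> < 2"
    and distinct: "\<And>i j. -1 \<le> i \<Longrightarrow> -1 \<le> j \<Longrightarrow> i \<noteq> j \<Longrightarrow> mpt \<beta> i \<noteq> mpt \<beta> j"
  shows "(\<forall>n. psi \<beta> n \<in> borel_measurable lborel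
              \<and> set_integrable lborel {0..1} (\<lambda>x. (psi \<beta> n x)\<^sup>2))
       \<and> (\<forall>n m. (LINT x:{0..1}|lborel. psi \<beta> n x * psi \<beta> m x) = (if n = m then 1 else 0))
       \<and> (\<forall>n m. n > m + 1 \<longrightarrow>
              (LINT x:{0..1}|lborel. psi \<beta> n x * Lb \<beta> (psi \<beta> m) x) = 0)"
proof -
  interpret orb \<beta> using assms by unfold_locales auto
  have c1: "\<forall>n. psi \<beta> n \<in> borel_measurable lborel
              \<and> set_integrable lborel {0..1} (\<lambda>x. (psi \<beta> n x)\<^sup>2)"
    using psi_meas psi_sq by simp
  have orth: "(LINT x:{0..1}|lborel. psi \<beta> n x * psi \<beta> m x) = 0" if mn: "m < n" for n m
  proof -
    have n: "0 < n" using mn by simp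
    have pc: "pcon \<beta> (psi \<beta> m) (int n - 1)"
      using pcon_mono[OF pcon_psi[of m]] mn by simp
    show ?thesis by (rule lemA[OF n psi_meas[of m]]) (rule pcon_const[OF n pc])
  qed
  have c2: "\<forall>n m. (LINT x:{0..1}|lborel. psi \<beta> n x * psi \<beta> m x) = (if n = m then 1 else 0)"
  proof (intro allI)
    fix n m :: nat
    consider (a) "n = m" | (b) "m < n" | (c) "n < m" using less_linear[of m n] by auto
    then show "(LINT x:{0..1}|lborel. psi \<beta> n x * psi \<beta> m x) = (if n = m then 1 else 0)"
    proof cases
      case a then show ?thesis using psi_sq[of n] by simp
    next
      case b then have "n \<noteq> m" by simp
      then show ?thesis using orth[OF b] by (simp only: if_False)
    next
      case c
      have e: "(\<lambda>x. psi \<beta> n x * psi \<beta> m x) = (\<lambda>x. psi \<beta> m x * psi \<beta> n x)"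
        by (rule ext) (rule mult.commute)
      have "n \<noteq> m" using c by simp
      then show ?thesis using orth[OF c] by (simp only: e if_False)
    qed
  qed
  have c3: "\<forall>n m. n > m + 1 \<longrightarrow>
              (LINT x:{0..1}|lborel. psi \<beta> n x * Lb \<beta> (psi \<beta> m) x) = 0"
  proof (intro allI impI)
    fix n m :: nat assume mn: "n > m + 1"
    have n: "0 < n" using mn by simp
    have pc: "pcon \<beta> (Lb \<beta> (psi \<beta> m)) (int n - 1)"
      using pcon_mono[OF pcon_Lb[OF b1 b2 pcon_psi[of m]]] mn by simp
    show "(LINT x:{0..1}|lborel. psi \<beta> n x * Lb \<beta> (psi \<beta> m) x) = 0"
      by (rule lemA[OF n Lb_meas[of m]]) (rule pcon_const[OF n pc])
  qed
  show ?thesis by (intro conjI c1 c2 c3)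
qed

end
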